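(* Let $(X,d_X)$ be a proper, doubling metric space and $p\in X$, and assume $X$ is comparable $\eta$-self-quasisymmetric at $p$. Then $X$ admits an $\eta'$-quasisymmetric embedding into every proper weak tangent in $PWT_p(X)$, where $\eta'(t)=1/\eta^{-1}(1/t)$.
   Context: $\eta$ is a homeomorphism of $[0,\infty)$; a homeomorphism $f$ (onto its image) is $\eta$-quasisymmetric if $d(f(x),f(y))/d(f(x),f(z))\le\eta(d(x,y)/d(x,z))$ for $x\ne z$. $X$ is comparable $\eta$-self-quasisymmetric at $p$ if there are $r_p>0$ and $C_p>0$ such that for every $0<r<r_p$ there is a subset $U\subset B(p,r)$ with $p\in U$, $r/C_p\le\operatorname{diam}U\le C_pr$, and an $\eta$-quasisymmetric homeomorphism from $U$ onto $X$. Proper: closed balls compact; doubling: every set of diameter $d$ covered by a bounded number of sets of diameter $\le d/2$. A proper weak tangent of $X$ at $p$ is a pointed Gromov–Hausdorff limit of $(X,p,d_X/\lambda_n)$ with $\lambda_n\to0^+$ (pointed GH convergence $(X_n,p_n,d_n)\to(Z,z,d)$, $Z$ complete: for every $r,\varepsilon>0$, for large $n$ there is a map $g:B(p_n,r)\to Z$ with $g(p_n)=z$, additive distortion $<\varepsilon$, and $B(z,r-\varepsilon)$ in the $\varepsilon$-neighborhood of $g(B(p_n,r))$); $PWT_p(X)$ is the set of these. *)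

theory Defs
  imports "HOL-Analysis.Analysis"
begin

definition mdiam :: "('a \<Rightarrow> 'a \<Rightarrow> real) \<Rightarrow> 'a set \<Rightarrow> real" where
  "mdiam d A = (if A = {} then 0 else Sup {d x y |x y. x \<in> A \<and> y \<in> A})"

definition eta_homeo :: "(real \<Rightarrow> real) \<Rightarrow> bool" where
  "eta_homeo \<eta> \<longleftrightarrow> (\<exists>g. homeomorphism {0..} {0..} \<eta> g)"

definition quasisymmetric ::
  "'a set \<Rightarrow> ('a \<Rightarrow> 'a \<Rightarrow> real) \<Rightarrow> 'b set \<Rightarrow> ('b \<Rightarrow> 'b \<Rightarrow> real)
     \<Rightarrow> (real \<Rightarrow> real) \<Rightarrow> ('a \<Rightarrow> 'b) \<Rightarrow> bool" where
  "quasisymmetric M d N e \<eta> f \<longleftrightarrow>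
     f \<in> M \<rightarrow> N \<and>
     homeomorphic_map (Metric_space.mtopology M d)
        (subtopology (Metric_space.mtopology N e) (f ` M)) f \<and>
     (\<forall>x\<in>M. \<forall>y\<in>M. \<forall>z\<in>M. x \<noteq> z \<longrightarrow>
        e (f x) (f y) / e (f x) (f z) \<le> \<eta> (d x y / d x z))"

definition comparable_self_qs ::
  "'a set \<Rightarrow> ('a \<Rightarrow> 'a \<Rightarrow> real) \<Rightarrow> (real \<Rightarrow> real) \<Rightarrow> 'a \<Rightarrow> bool" where
  "comparable_self_qs M d \<eta> p \<longleftrightarrow>
     (\<exists>rp > 0. \<exists>Cp > 0. \<forall>r. 0 < r \<and> r < rp \<longrightarrow>
        (\<exists>U. U \<subseteq> Metric_space.mball M d p r \<and> p \<in> U \<and>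
             r / Cp \<le> mdiam d U \<and> mdiam d U \<le> Cp * r \<and>
             (\<exists>f. quasisymmetric U d M d \<eta> f \<and> f ` U = M)))"

definition proper_mspace :: "'a set \<Rightarrow> ('a \<Rightarrow> 'a \<Rightarrow> real) \<Rightarrow> bool" where
  "proper_mspace M d \<longleftrightarrow>
     (\<forall>x\<in>M. \<forall>r. compactin (Metric_space.mtopology M d) (Metric_space.mcball M d x r))"

definition doubling_mspace :: "'a set \<Rightarrow> ('a \<Rightarrow> 'a \<Rightarrow> real) \<Rightarrow> bool" where
  "doubling_mspace M d \<longleftrightarrow>
     (\<exists>N::nat. \<forall>A. A \<subseteq> M \<and> Metric_space.mbounded M d A \<longrightarrow>
        (\<exists>F. finite F \<and> card F \<le> N \<and> A \<subseteq> \<Union>F \<and>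
             (\<forall>B\<in>F. B \<subseteq> M \<and> Metric_space.mbounded M d B \<and> mdiam d B \<le> mdiam d A / 2)))"

definition pGH_conv ::
  "(nat \<Rightarrow> 'a set) \<Rightarrow> (nat \<Rightarrow> 'a) \<Rightarrow> (nat \<Rightarrow> 'a \<Rightarrow> 'a \<Rightarrow> real)
     \<Rightarrow> 'b set \<Rightarrow> 'b \<Rightarrow> ('b \<Rightarrow> 'b \<Rightarrow> real) \<Rightarrow> bool" where
  "pGH_conv Xs ps ds Z z dZ \<longleftrightarrow>
     (\<forall>n. Metric_space (Xs n) (ds n) \<and> ps n \<in> Xs n) \<and>
     Metric_space Z dZ \<and> Metric_space.mcomplete Z dZ \<and> z \<in> Z \<and>
     (\<forall>r>0. \<forall>\<epsilon>>0. \<forall>\<^sub>F n in sequentially.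
        (\<exists>g. g \<in> Metric_space.mball (Xs n) (ds n) (ps n) r \<rightarrow> Z \<and> g (ps n) = z \<and>
             (\<forall>x\<in>Metric_space.mball (Xs n) (ds n) (ps n) r.
                \<forall>y\<in>Metric_space.mball (Xs n) (ds n) (ps n) r.
                  \<bar>dZ (g x) (g y) - ds n x y\<bar> < \<epsilon>) \<and>
             (\<forall>w\<in>Metric_space.mball Z dZ z (r - \<epsilon>).
                \<exists>x\<in>Metric_space.mball (Xs n) (ds n) (ps n) r. dZ w (g x) < \<epsilon>)))"

definition in_PWT ::
  "'a set \<Rightarrow> ('a \<Rightarrow> 'a \<Rightarrow> real) \<Rightarrow> 'a \<Rightarrow> 'b set \<Rightarrow> 'b \<Rightarrow> ('b \<Rightarrow> 'b \<Rightarrow> real) \<Rightarrow> bool" where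
  "in_PWT M d p Z z dZ \<longleftrightarrow>
     (\<exists>lam::nat \<Rightarrow> real. (\<forall>n. 0 < lam n) \<and> lam \<longlonglongrightarrow> 0 \<and>
        pGH_conv (\<lambda>n. M) (\<lambda>n. p) (\<lambda>n x y. d x y / lam n) Z z dZ)"

end

theory Submission
  imports Defs
begin

lemma eta_basic:
  assumes "eta_homeo \<eta>"
  shows "\<eta> 0 = 0" "\<And>x. 0 \<le> x \<Longrightarrow> 0 \<le> \<eta> x"
    "\<And>x y. 0 \<le> x \<Longrightarrow> x < y \<Longrightarrow> \<eta> x < \<eta> y"
    "\<And>s. 0 \<le> s \<Longrightarrow> 0 \<le> inv_into {0..} \<eta> s \<and> \<eta> (inv_into {0..} \<eta> s) = s"
    "\<And>t. 0 \<le> t \<Longrightarrow> inv_into {0..} \<eta> (\<eta> t) = t"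
proof -
  obtain g where hm: "homeomorphism {0..} {0..} \<eta> g"
    using assms unfolding eta_homeo_def by blast
  have img: "\<eta> ` {0..} = {0..}" and cont: "continuous_on {0..} \<eta>"
    and inj: "inj_on \<eta> {0..}"
    using hm unfolding homeomorphism_def by (auto intro: inj_on_inverseI)
  show nn: "\<And>x. 0 \<le> x \<Longrightarrow> 0 \<le> \<eta> x" using img by auto
  have sur: "\<And>s. 0 \<le> s \<Longrightarrow> \<exists>x\<ge>0. \<eta> x = s" using img by (metis atLeast_iff imageE)
  have tri: "\<And>a x b. 0 \<le> a \<Longrightarrow> a < x \<Longrightarrow> x < b \<Longrightarrow>
      (\<eta> a < \<eta> x \<and> \<eta> x < \<eta> b) \<or> (\<eta> b < \<eta> x \<and> \<eta> x < \<eta> a)"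
  proof -
    fix a x b :: real assume "0 \<le> a" "a < x" "x < b"
    have "continuous_on {a..b} \<eta>" using cont by (rule continuous_on_subset) (use \<open>0 \<le> a\<close> in auto)
    moreover have "inj_on \<eta> {a..b}" using inj by (rule inj_on_subset) (use \<open>0 \<le> a\<close> in auto)
    ultimately show "(\<eta> a < \<eta> x \<and> \<eta> x < \<eta> b) \<or> (\<eta> b < \<eta> x \<and> \<eta> x < \<eta> a)"
      using continuous_inj_imp_mono[OF \<open>a < x\<close> \<open>x < b\<close>] by blast
  qed
  show e0: "\<eta> 0 = 0"
  proof (rule ccontr)
    assume ne: "\<eta> 0 \<noteq> 0"
    obtain a where a: "a \<ge> 0" "\<eta> a = 0" using sur by auto
    obtain b where b: "b \<ge> 0" "\<eta> b = \<eta> 0 + 1" using sur nn by (metis add_nonneg_nonneg zero_le_one order.refl)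
    have "a > 0" using a ne by (cases "a = 0") auto
    have "b > 0" using b by (cases "b = 0") auto
    have "a \<noteq> b" using a b nn[of 0] by auto
    show False
    proof (cases "a < b")
      case True
      then show ?thesis using tri[of 0 a b] \<open>a > 0\<close> a b nn[of 0] by auto
    next
      case False
      then have "b < a" using \<open>a \<noteq> b\<close> by auto
      then show ?thesis using tri[of 0 b a] \<open>b > 0\<close> a b nn[of 0] by auto
    qed
  qed
  show mono: "\<And>x y. 0 \<le> x \<Longrightarrow> x < y \<Longrightarrow> \<eta> x < \<eta> y"
  proof -
    fix x y :: real assume "0 \<le> x" "x < y"
    show "\<eta> x < \<eta> y"
    proof (cases "x = 0")
      case True
      have "\<eta> y \<noteq> \<eta> 0" using inj \<open>x < y\<close> True inj_on_eq_iff[OF inj, of y 0] by auto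
      then show ?thesis using nn[of y] True e0 \<open>0 \<le> x\<close> \<open>x < y\<close> by auto
    next
      case False
      then show ?thesis using tri[of 0 x y] \<open>0 \<le> x\<close> \<open>x < y\<close> e0 nn[of x] by auto
    qed
  qed
  show "\<And>s. 0 \<le> s \<Longrightarrow> 0 \<le> inv_into {0..} \<eta> s \<and> \<eta> (inv_into {0..} \<eta> s) = s"
  proof -
    fix s :: real assume "0 \<le> s"
    then have "s \<in> \<eta> ` {0..}" using img by auto
    then show "0 \<le> inv_into {0..} \<eta> s \<and> \<eta> (inv_into {0..} \<eta> s) = s"
      using inv_into_into[of s \<eta> "{0..}"] f_inv_into_f[of s \<eta> "{0..}"] by auto
  qed
  show "\<And>t. 0 \<le> t \<Longrightarrow> inv_into {0..} \<eta> (\<eta> t) = t"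
    using inv_into_f_f[OF inj] by auto
qed

lemma ginv_mono:
  assumes "eta_homeo \<eta>" "0 \<le> s" "s \<le> t"
  shows "inv_into {0..} \<eta> s \<le> inv_into {0..} \<eta> t"
proof (rule ccontr)
  assume "\<not> ?thesis"
  then have "inv_into {0..} \<eta> t < inv_into {0..} \<eta> s" by simp
  moreover have "0 \<le> inv_into {0..} \<eta> t" using eta_basic(4)[OF assms(1), of t] assms by auto
  ultimately have "\<eta> (inv_into {0..} \<eta> t) < \<eta> (inv_into {0..} \<eta> s)"
    using eta_basic(3)[OF assms(1)] by blast
  then show False using eta_basic(4)[OF assms(1)] assms by auto
qed

lemma ginv_pos:
  assumes "eta_homeo \<eta>" "0 < s"
  shows "0 < inv_into {0..} \<eta> s"
proof -
  have "0 \<le> inv_into {0..} \<eta> s" "\<eta> (inv_into {0..} \<eta> s) = s"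
    using eta_basic(4)[OF assms(1)] assms(2) by auto
  moreover have "\<eta> 0 = 0" using eta_basic(1)[OF assms(1)] .
  ultimately show ?thesis using assms(2) by (cases "inv_into {0..} \<eta> s = 0") auto
qed

lemma ginv_zero:
  assumes "eta_homeo \<eta>"
  shows "inv_into {0..} \<eta> 0 = 0"
  using eta_basic(5)[OF assms, of 0] eta_basic(1)[OF assms] by simp

lemma etap_nonneg:
  assumes "eta_homeo \<eta>" "0 \<le> t"
  shows "0 \<le> 1 / inv_into {0..} \<eta> (1 / t)"
  using eta_basic(4)[OF assms(1), of "1/t"] assms by simp

lemma etap_mono:
  assumes "eta_homeo \<eta>" "0 \<le> s" "s \<le> t"
  shows "1 / inv_into {0..} \<eta> (1 / s) \<le> 1 / inv_into {0..} \<eta> (1 / t)"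
proof (cases "s = 0")
  case True
  then show ?thesis using ginv_zero[OF assms(1)] etap_nonneg[OF assms(1), of t] assms by simp
next
  case False
  then have "0 < s" "0 < t" using assms by auto
  have "1/t \<le> 1/s" using \<open>0 < s\<close> assms(3) by (simp add: frac_le)
  then have "inv_into {0..} \<eta> (1/t) \<le> inv_into {0..} \<eta> (1/s)"
    using ginv_mono[OF assms(1)] \<open>0 < t\<close> by simp
  moreover have "0 < inv_into {0..} \<eta> (1/t)" using ginv_pos[OF assms(1)] \<open>0 < t\<close> by simp
  ultimately show ?thesis by (simp add: frac_le)
qed

lemma etap_small:
  assumes "eta_homeo \<eta>" "0 < e"
  shows "\<exists>\<delta>>0. \<forall>t. 0 \<le> t \<and> t < \<delta> \<longrightarrow> 1 / inv_into {0..} \<eta> (1 / t) < e"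
proof -
  define \<delta> where "\<delta> = 1 / (\<eta> (2 / e) + 1)"
  have eta2: "0 \<le> \<eta> (2/e)" using eta_basic(2)[OF assms(1)] assms(2) by simp
  have "\<delta> > 0" unfolding \<delta>_def using eta2 by simp
  moreover have "1 / inv_into {0..} \<eta> (1 / t) < e" if "0 \<le> t" "t < \<delta>" for t
  proof (cases "t = 0")
    case True
    then show ?thesis using ginv_zero[OF assms(1)] assms(2) by simp
  next
    case False
    then have "t > 0" using that by simp
    have "1/\<delta> < 1/t" using \<open>t>0\<close> that(2) by (simp add: frac_less2)
    then have "\<eta> (2/e) < 1/t" unfolding \<delta>_def by simp
    then have "inv_into {0..} \<eta> (\<eta> (2/e)) \<le> inv_into {0..} \<eta> (1/t)"
      using ginv_mono[OF assms(1)] eta2 by simp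
    then have "2/e \<le> inv_into {0..} \<eta> (1/t)" using eta_basic(5)[OF assms(1)] assms(2) by simp
    moreover have "0 < 2/e" using assms(2) by simp
    ultimately have "0 < inv_into {0..} \<eta> (1/t)" by linarith
    moreover have "2 \<le> e * inv_into {0..} \<eta> (1/t)"
      using \<open>2/e \<le> _\<close> assms(2) by (auto simp: field_simps)
    ultimately have "1 / inv_into {0..} \<eta> (1/t) \<le> e/2" by (simp add: field_simps)
    then show ?thesis using assms(2) by simp
  qed
  ultimately show ?thesis by blast
qed

lemma ginv_le:
  assumes "eta_homeo \<eta>" "0 \<le> A" "0 \<le> B" "A \<le> \<eta> B"
  shows "inv_into {0..} \<eta> A \<le> B"
  using ginv_mono[OF assms(1) assms(2) assms(4)] eta_basic(5)[OF assms(1) assms(3)] by simp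

lemma mdiam_le:
  assumes "A \<noteq> {}" "\<And>x y. x \<in> A \<Longrightarrow> y \<in> A \<Longrightarrow> d x y \<le> B"
  shows "mdiam d A \<le> B"
proof -
  have ne: "{d x y |x y. x \<in> A \<and> y \<in> A} \<noteq> {}" using assms(1) by blast
  have "Sup {d x y |x y. x \<in> A \<and> y \<in> A} \<le> B"
    by (rule cSup_least[OF ne]) (use assms(2) in blast)
  then show ?thesis unfolding mdiam_def using assms(1) by simp
qed

lemma mdiam_ge:
  assumes "x \<in> A" "y \<in> A" "\<And>x y. x \<in> A \<Longrightarrow> y \<in> A \<Longrightarrow> d x y \<le> B"
  shows "d x y \<le> mdiam d A"
proof -
  have "bdd_above {d x y |x y. x \<in> A \<and> y \<in> A}"
    using assms(3) by (auto simp: bdd_above_def)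
  then show ?thesis unfolding mdiam_def using assms(1,2) by (auto intro!: cSup_upper)
qed

lemma mdiam_exists:
  assumes "A \<noteq> {}" "c < mdiam d A"
  shows "\<exists>x\<in>A. \<exists>y\<in>A. c < d x y"
proof (rule ccontr)
  assume "\<not> ?thesis"
  then have "\<And>x y. x \<in> A \<Longrightarrow> y \<in> A \<Longrightarrow> d x y \<le> c" by (meson not_less)
  then have "mdiam d A \<le> c" by (intro mdiam_le[OF assms(1)])
  then show False using assms(2) by simp
qed

lemma mball_scaled:
  assumes "Metric_space M d" "Metric_space M (\<lambda>x y. d x y / l)" "0 < l"
  shows "Metric_space.mball M (\<lambda>x y. d x y / l) p r = Metric_space.mball M d p (r * l)"
  unfolding Metric_space.mball_def[OF assms(1)] Metric_space.mball_def[OF assms(2)]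
  using assms(3) by (auto simp: field_simps)

lemma qs_inverse:
  assumes ms: "Metric_space M d" and UM: "U \<subseteq> M" and eh: "eta_homeo \<eta>"
    and qs: "quasisymmetric U d M d \<eta> f" and onto: "f ` U = M"
  shows "inj_on f U" "inv_into U f ` M = U"
    "\<And>a. a \<in> M \<Longrightarrow> inv_into U f a \<in> U"
    "\<And>a. a \<in> M \<Longrightarrow> f (inv_into U f a) = a"
    "\<And>a b c. a \<in> M \<Longrightarrow> b \<in> M \<Longrightarrow> c \<in> M \<Longrightarrow> a \<noteq> c \<Longrightarrow>
       d (inv_into U f a) (inv_into U f b)
         \<le> (1 / inv_into {0..} \<eta> (1 / (d a b / d a c))) * d (inv_into U f a) (inv_into U f c)"
proof -
  interpret M: Metric_space M d by fact
  interpret U: Metric_space U d using M.subspace[OF UM] .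
  have hm: "homeomorphic_map U.mtopology (subtopology M.mtopology (f ` U)) f"
    and ineq: "\<And>x y z. x\<in>U \<Longrightarrow> y\<in>U \<Longrightarrow> z\<in>U \<Longrightarrow> x \<noteq> z \<Longrightarrow>
        d (f x) (f y) / d (f x) (f z) \<le> \<eta> (d x y / d x z)"
    using qs unfolding quasisymmetric_def by auto
  show inj: "inj_on f U" using homeomorphic_imp_injective_map[OF hm] by simp
  show "inv_into U f ` M = U" using inv_into_image_cancel[OF inj, of U] onto by simp
  show hU: "\<And>a. a \<in> M \<Longrightarrow> inv_into U f a \<in> U" using onto inv_into_into[of _ f U] by blast
  show fh: "\<And>a. a \<in> M \<Longrightarrow> f (inv_into U f a) = a" using onto f_inv_into_f[of _ f U] by blast
  fix a b c assume a: "a \<in> M" and b: "b \<in> M" and c: "c \<in> M" and ac: "a \<noteq> c"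
  define x where "x = inv_into U f a"
  define y where "y = inv_into U f b"
  define w where "w = inv_into U f c"
  have xU: "x \<in> U" and yU: "y \<in> U" and wU: "w \<in> U" using hU a b c x_def y_def w_def by auto
  have fx: "f x = a" and fy: "f y = b" and fw: "f w = c" using fh a b c x_def y_def w_def by auto
  have xw: "x \<noteq> w" using fx fw ac by auto
  have dxw: "0 < d x w" using xw xU wU UM by auto
  have E0: "0 \<le> 1 / inv_into {0..} \<eta> (1 / (d a b / d a c))"
    by (rule etap_nonneg[OF eh]) (use a b c in auto)
  show "d x y \<le> (1 / inv_into {0..} \<eta> (1 / (d a b / d a c))) * d x w"
  proof (cases "b = a")
    case True
    then have "y = x" using x_def y_def by simp
    then show ?thesis using E0 dxw xU UM by auto
  next
    case False
    then have xy: "x \<noteq> y" using fx fy by auto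
    have dxy: "0 < d x y" using xy xU yU UM by auto
    have dab: "0 < d a b" and dac: "0 < d a c" using False ac a b c by auto
    have "d a c / d a b \<le> \<eta> (d x w / d x y)"
      using ineq[OF xU wU yU xy] fx fy fw by simp
    then have gA: "inv_into {0..} \<eta> (d a c / d a b) \<le> d x w / d x y"
      by (intro ginv_le[OF eh]) (use dab dac dxy dxw in auto)
    have gpos: "0 < inv_into {0..} \<eta> (d a c / d a b)"
      by (rule ginv_pos[OF eh]) (use dab dac in auto)
    have eq: "1 / (d a b / d a c) = d a c / d a b" by simp
    have "inv_into {0..} \<eta> (d a c / d a b) * d x y \<le> d x w"
      using gA dxy by (simp add: field_simps)
    then have "d x y \<le> d x w / inv_into {0..} \<eta> (d a c / d a b)"
      using gpos by (simp add: field_simps)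
    then show ?thesis unfolding eq by simp
  qed
qed



definition goodcov where
  "goodcov M d A e F \<longleftrightarrow> finite F \<and> A \<subseteq> \<Union>F \<and>
      (\<forall>B\<in>F. B \<subseteq> M \<and> Metric_space.mbounded M d B \<and> mdiam d B \<le> e)"

lemma doubling_iter:
  assumes ms: "Metric_space M d" and db: "doubling_mspace M d"
    and AM: "A \<subseteq> M" and Ab: "Metric_space.mbounded M d A"
  shows "\<exists>F. goodcov M d A (mdiam d A / 2^j) F"
proof (induction j)
  case 0
  show ?case unfolding goodcov_def by (rule exI[of _ "{A}"]) (use AM Ab in simp)
next
  case (Suc j)
  obtain F where F: "goodcov M d A (mdiam d A / 2^j) F" using Suc.IH by (rule exE)
  have step: "\<exists>G. goodcov M d B (mdiam d B / 2) G" if "B \<subseteq> M" "Metric_space.mbounded M d B" for B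
  proof -
    obtain N where N: "\<forall>A. A \<subseteq> M \<and> Metric_space.mbounded M d A \<longrightarrow>
        (\<exists>F. finite F \<and> card F \<le> N \<and> A \<subseteq> \<Union>F \<and>
             (\<forall>B\<in>F. B \<subseteq> M \<and> Metric_space.mbounded M d B \<and> mdiam d B \<le> mdiam d A / 2))"
      using db unfolding doubling_mspace_def by (rule exE)
    have "\<exists>F. finite F \<and> card F \<le> N \<and> B \<subseteq> \<Union>F \<and>
             (\<forall>C\<in>F. C \<subseteq> M \<and> Metric_space.mbounded M d C \<and> mdiam d C \<le> mdiam d B / 2)"
      using N that by simp
    then show ?thesis unfolding goodcov_def by (elim exE) (intro exI, elim conjE, intro conjI)
  qed
  have "\<forall>B\<in>F. \<exists>G. goodcov M d B (mdiam d B / 2) G"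
    using step F unfolding goodcov_def by simp
  then obtain G where G: "\<And>B. B \<in> F \<Longrightarrow> goodcov M d B (mdiam d B / 2) (G B)"
    by (metis (no_types))
  have Ff: "finite F" "A \<subseteq> \<Union>F" and Fb: "\<And>B. B \<in> F \<Longrightarrow> mdiam d B \<le> mdiam d A / 2^j"
    using F unfolding goodcov_def by auto
  have Gf: "finite (G B)" "B \<subseteq> \<Union>(G B)" if "B \<in> F" for B
    using G[OF that] unfolding goodcov_def by auto
  have Gc: "C \<subseteq> M \<and> Metric_space.mbounded M d C \<and> mdiam d C \<le> mdiam d B / 2" if "B \<in> F" "C \<in> G B" for B C
    using G[OF that(1)] that(2) unfolding goodcov_def by auto
  have fin: "finite (\<Union>B\<in>F. G B)" by (rule finite_UN_I) (use Ff Gf in auto)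
  have cov: "A \<subseteq> \<Union>(\<Union>B\<in>F. G B)"
  proof
    fix x assume "x \<in> A"
    then obtain B where "B \<in> F" "x \<in> B" using Ff by auto
    then obtain C where "C \<in> G B" "x \<in> C" using Gf(2)[OF \<open>B \<in> F\<close>] by auto
    then show "x \<in> \<Union>(\<Union>B\<in>F. G B)" using \<open>B \<in> F\<close> by auto
  qed
  have pc: "C \<subseteq> M \<and> Metric_space.mbounded M d C \<and> mdiam d C \<le> mdiam d A / 2 ^ Suc j"
    if "C \<in> (\<Union>B\<in>F. G B)" for C
  proof -
    from that obtain B where B: "B \<in> F" "C \<in> G B" by auto
    have "mdiam d C \<le> mdiam d B / 2" using Gc[OF B] by simp
    also have "\<dots> \<le> (mdiam d A / 2^j) / 2" using Fb[OF B(1)] by (simp add: divide_right_mono)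
    finally show ?thesis using Gc[OF B] by simp
  qed
  show ?case unfolding goodcov_def using fin cov pc by blast
qed

lemma totally_bounded_any_centres:
  assumes ms: "Metric_space Z dZ" and SZ: "S \<subseteq> Z"
    and cov: "\<And>e. 0 < e \<Longrightarrow> \<exists>C. finite C \<and> S \<subseteq> (\<Union>c\<in>C. Metric_space.mball Z dZ c e)"
  shows "Metric_space.mtotally_bounded Z dZ S"
proof -
  interpret Z: Metric_space Z dZ by fact
  show ?thesis unfolding Z.mtotally_bounded_def
  proof (intro allI impI)
    fix \<epsilon> :: real assume "0 < \<epsilon>"
    then obtain C where C: "finite C" "S \<subseteq> (\<Union>c\<in>C. Z.mball c (\<epsilon>/2))" using cov[of "\<epsilon>/2"] by auto
    define C' where "C' = {c\<in>C. Z.mball c (\<epsilon>/2) \<inter> S \<noteq> {}}"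
    define s where "s c = (SOME x. x \<in> Z.mball c (\<epsilon>/2) \<inter> S)" for c
    have s: "s c \<in> Z.mball c (\<epsilon>/2) \<inter> S" if "c \<in> C'" for c
    proof -
      have "\<exists>x. x \<in> Z.mball c (\<epsilon>/2) \<inter> S" using that unfolding C'_def by blast
      then show ?thesis unfolding s_def by (rule someI_ex)
    qed
    show "\<exists>K. finite K \<and> K \<subseteq> S \<and> S \<subseteq> (\<Union>x\<in>K. Z.mball x \<epsilon>)"
    proof (intro exI[of _ "s ` C'"] conjI)
      show "finite (s ` C')" using C(1) unfolding C'_def by auto
      show "s ` C' \<subseteq> S" using s by auto
      show "S \<subseteq> (\<Union>x\<in>s ` C'. Z.mball x \<epsilon>)"
      proof
        fix x assume "x \<in> S"
        then obtain c where c: "c \<in> C" "x \<in> Z.mball c (\<epsilon>/2)" using C(2) by auto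
        then have cC': "c \<in> C'" unfolding C'_def using \<open>x \<in> S\<close> by auto
        have sc: "s c \<in> Z.mball c (\<epsilon>/2)" "s c \<in> S" using s[OF cC'] by auto
        have cZ: "c \<in> Z" and sZ: "s c \<in> Z" and xZ: "x \<in> Z" using sc c by auto
        have "dZ (s c) x \<le> dZ c (s c) + dZ c x" by (rule Z.triangle''[OF sZ cZ xZ])
        also have "\<dots> < \<epsilon>" using sc(1) c(2) by simp
        finally have "x \<in> Z.mball (s c) \<epsilon>" using sZ xZ by simp
        then show "x \<in> (\<Union>x\<in>s ` C'. Z.mball x \<epsilon>)" using cC' by auto
      qed
    qed
  qed
qed

lemma pGH_get:
  assumes "pGH_conv (\<lambda>n. M) (\<lambda>n. p) (\<lambda>n x y. d x y / lam n) Z z dZ" "0 < r" "0 < \<epsilon>"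
  shows "\<exists>N. \<forall>n\<ge>N. \<exists>g. g \<in> Metric_space.mball M (\<lambda>x y. d x y / lam n) p r \<rightarrow> Z \<and> g p = z \<and>
             (\<forall>x\<in>Metric_space.mball M (\<lambda>x y. d x y / lam n) p r.
                \<forall>y\<in>Metric_space.mball M (\<lambda>x y. d x y / lam n) p r.
                  \<bar>dZ (g x) (g y) - d x y / lam n\<bar> < \<epsilon>) \<and>
             (\<forall>w\<in>Metric_space.mball Z dZ z (r - \<epsilon>).
                \<exists>x\<in>Metric_space.mball M (\<lambda>x y. d x y / lam n) p r. dZ w (g x) < \<epsilon>)"
proof -
  have H: "\<forall>r>0. \<forall>\<epsilon>>0. \<forall>\<^sub>F n in sequentially.
        (\<exists>g. g \<in> Metric_space.mball M (\<lambda>x y. d x y / lam n) p r \<rightarrow> Z \<and> g p = z \<and>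
             (\<forall>x\<in>Metric_space.mball M (\<lambda>x y. d x y / lam n) p r.
                \<forall>y\<in>Metric_space.mball M (\<lambda>x y. d x y / lam n) p r.
                  \<bar>dZ (g x) (g y) - d x y / lam n\<bar> < \<epsilon>) \<and>
             (\<forall>w\<in>Metric_space.mball Z dZ z (r - \<epsilon>).
                \<exists>x\<in>Metric_space.mball M (\<lambda>x y. d x y / lam n) p r. dZ w (g x) < \<epsilon>))"
    using assms(1) unfolding pGH_conv_def by (elim conjE)
  show ?thesis using H assms(2,3) unfolding eventually_sequentially by simp
qed

lemma pGH_basic:
  assumes "pGH_conv (\<lambda>n. M) (\<lambda>n. p) (\<lambda>n x y. d x y / lam n) Z z dZ"
  shows "Metric_space Z dZ" "Metric_space.mcomplete Z dZ" "z \<in> Z"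
    "\<And>n. Metric_space M (\<lambda>x y. d x y / lam n)"
  using assms unfolding pGH_conv_def by auto

lemma Zball_tb:
  assumes ms: "Metric_space M d" and db: "doubling_mspace M d" and pM: "p \<in> M"
    and lampos: "\<And>n. 0 < lam n"
    and gh: "pGH_conv (\<lambda>n. M) (\<lambda>n. p) (\<lambda>n x y. d x y / lam n) Z z dZ"
  shows "Metric_space.mtotally_bounded Z dZ (Metric_space.mcball Z dZ z 2)"
proof -
  interpret M: Metric_space M d by fact
  have MZ: "Metric_space Z dZ" using pGH_basic[OF gh] by simp
  interpret Z: Metric_space Z dZ by fact
  show ?thesis
  proof (rule totally_bounded_any_centres[OF MZ Z.mcball_subset_mspace])
    fix \<epsilon> :: real assume "0 < \<epsilon>"
    define e where "e = min (\<epsilon>/8) (1/2)"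
    have e0: "0 < e" and e1: "e \<le> 1/2" and e2: "e \<le> \<epsilon>/8" using \<open>0 < \<epsilon>\<close> unfolding e_def by auto
    obtain N where N: "\<forall>n\<ge>N. \<exists>g. g \<in> Metric_space.mball M (\<lambda>x y. d x y / lam n) p 3 \<rightarrow> Z \<and> g p = z \<and>
             (\<forall>x\<in>Metric_space.mball M (\<lambda>x y. d x y / lam n) p 3.
                \<forall>y\<in>Metric_space.mball M (\<lambda>x y. d x y / lam n) p 3.
                  \<bar>dZ (g x) (g y) - d x y / lam n\<bar> < e) \<and>
             (\<forall>w\<in>Metric_space.mball Z dZ z (3 - e).
                \<exists>x\<in>Metric_space.mball M (\<lambda>x y. d x y / lam n) p 3. dZ w (g x) < e)"
      using pGH_get[OF gh, of 3 e] e0 by auto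
    define l where "l = lam N"
    have l0: "0 < l" unfolding l_def by (rule lampos)
    have mb: "Metric_space.mball M (\<lambda>x y. d x y / lam N) p 3 = M.mball p (3 * l)"
      unfolding l_def by (rule mball_scaled[OF ms pGH_basic(4)[OF gh] lampos])
    define B where "B = M.mball p (3 * l)"
    obtain g where g: "g \<in> B \<rightarrow> Z" "g p = z"
      "\<And>x y. x \<in> B \<Longrightarrow> y \<in> B \<Longrightarrow> \<bar>dZ (g x) (g y) - d x y / l\<bar> < e"
      "\<And>w. w \<in> Z.mball z (3 - e) \<Longrightarrow> \<exists>x\<in>B. dZ w (g x) < e"
      using N[rule_format, of N] unfolding mb B_def l_def by blast
    have BM: "B \<subseteq> M" and Bb: "M.mbounded B" unfolding B_def by auto
    have pB: "p \<in> B" unfolding B_def using pM l0 by simp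
    have dB: "mdiam d B \<le> 6 * l"
    proof (rule mdiam_le)
      show "B \<noteq> {}" using pB by auto
      fix x y assume "x \<in> B" "y \<in> B"
      then have xM: "x \<in> M" and yM: "y \<in> M" and "d p x < 3 * l" "d p y < 3 * l" unfolding B_def by auto
      moreover have "d x y \<le> d p x + d p y" by (rule M.triangle''[OF xM pM yM])
      ultimately show "d x y \<le> 6 * l" by linarith
    qed
    obtain j where j: "(1/2::real)^j < e/6" using real_arch_pow_inv[of "e/6" "1/2"] e0 by auto
    obtain F where F: "goodcov M d B (mdiam d B / 2^j) F"
      using doubling_iter[OF ms db BM Bb] by blast
    have Ff: "finite F" and Fc: "B \<subseteq> \<Union>F"
      and Fp: "\<And>P. P \<in> F \<Longrightarrow> P \<subseteq> M \<and> M.mbounded P \<and> mdiam d P \<le> mdiam d B / 2^j"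
      using F unfolding goodcov_def by auto
    define pick where "pick P = (SOME x. x \<in> P \<inter> B)" for P
    have pick: "pick P \<in> P \<inter> B" if "P \<inter> B \<noteq> {}" for P
    proof -
      have "\<exists>x. x \<in> P \<inter> B" using that by blast
      then show ?thesis unfolding pick_def by (rule someI_ex)
    qed
    define C where "C = g ` (pick ` {P\<in>F. P \<inter> B \<noteq> {}})"
    show "\<exists>C. finite C \<and> Z.mcball z 2 \<subseteq> (\<Union>c\<in>C. Z.mball c \<epsilon>)"
    proof (intro exI[of _ C] conjI)
      show "finite C" unfolding C_def using Ff by simp
      show "Z.mcball z 2 \<subseteq> (\<Union>c\<in>C. Z.mball c \<epsilon>)"
      proof
        fix w assume w: "w \<in> Z.mcball z 2"
        then have wZ: "w \<in> Z" and "dZ z w \<le> 2" by auto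
        then have "w \<in> Z.mball z (3 - e)" using e1 pGH_basic(3)[OF gh] by simp
        then obtain x where xB: "x \<in> B" and wx: "dZ w (g x) < e" using g(4) by blast
        obtain P where P: "P \<in> F" "x \<in> P" using Fc xB by blast
        then have PB: "P \<inter> B \<noteq> {}" using xB by blast
        define x' where "x' = pick P"
        have x'P: "x' \<in> P" and x'B: "x' \<in> B" using pick[OF PB] unfolding x'_def by auto
        have Pp: "P \<subseteq> M" "M.mbounded P" "mdiam d P \<le> mdiam d B / 2^j" using Fp[OF P(1)] by auto
        obtain K where K: "\<forall>u\<in>P. \<forall>v\<in>P. d u v \<le> K" using Pp(2) unfolding M.mbounded_alt by blast
        have "d x x' \<le> mdiam d P" by (rule mdiam_ge[OF P(2) x'P]) (use K in blast)
        also have "\<dots> \<le> mdiam d B / 2^j" by (rule Pp(3))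
        also have "\<dots> \<le> 6 * l / 2^j" using dB by (simp add: divide_right_mono)
        also have "\<dots> = 6 * l * (1/2)^j" by (simp add: power_one_over)
        also have "\<dots> < 6 * l * (e/6)" using j l0 by simp
        finally have "d x x' < e * l" by (simp add: mult.commute)
        then have dxx': "d x x' / l < e" using l0 by (simp add: field_simps)
        have "\<bar>dZ (g x) (g x') - d x x' / l\<bar> < e" by (rule g(3)[OF xB x'B])
        then have g2: "dZ (g x) (g x') < 2 * e" using dxx' by linarith
        have gxZ: "g x \<in> Z" and gx'Z: "g x' \<in> Z" using g(1) xB x'B by auto
        have "dZ (g x') w \<le> dZ (g x') (g x) + dZ (g x) w" by (rule Z.triangle[OF gx'Z gxZ wZ])
        also have "\<dots> = dZ (g x) (g x') + dZ w (g x)" by (simp add: Z.commute)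
        also have "\<dots> < \<epsilon>" using g2 wx e2 \<open>0 < \<epsilon>\<close> by linarith
        finally have "w \<in> Z.mball (g x') \<epsilon>" using gx'Z wZ by simp
        moreover have "g x' \<in> C" unfolding C_def x'_def using P(1) PB by blast
        ultimately show "w \<in> (\<Union>c\<in>C. Z.mball c \<epsilon>)" by blast
      qed
    qed
  qed
qed

lemma cluster_point:
  fixes FF :: "nat \<Rightarrow> 'a \<Rightarrow> 'b"
  assumes ms: "Metric_space Z dZ" and K: "compactin (Metric_space.mtopology Z dZ) K"
    and FF: "\<And>k x. x \<in> X \<Longrightarrow> FF k x \<in> K"
  shows "\<exists>F. (\<forall>x\<in>X. F x \<in> K) \<and>
     (\<forall>x\<in>X. \<forall>y\<in>X. \<forall>w\<in>X. \<forall>\<delta>>0. \<forall>N. \<exists>k\<ge>N.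
        dZ (F x) (FF k x) < \<delta> \<and> dZ (F y) (FF k y) < \<delta> \<and> dZ (F w) (FF k w) < \<delta>)"
proof -
  interpret Z: Metric_space Z dZ by fact
  define T where "T = subtopology Z.mtopology K"
  have KZ: "K \<subseteq> Z" using compactin_subset_topspace[OF K] by simp
  have topT: "topspace T = K" unfolding T_def using KZ by auto
  have cT: "compact_space T" unfolding T_def by (rule compact_space_subtopology[OF K])
  define PT where "PT = product_topology (\<lambda>_. T) X"
  have cPT: "compact_space PT" unfolding PT_def using cT compact_space_product_topology by blast
  have topPT: "topspace PT = (\<Pi>\<^sub>E i\<in>X. K)" unfolding PT_def using topT by simp
  define GG where "GG k = restrict (FF k) X" for k
  have GGt: "GG k \<in> topspace PT" for k unfolding topPT GG_def using FF by auto
  define CC where "CC N = PT closure_of (GG ` {N..})" for N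
  have GGC: "GG m \<in> CC N" if "N \<le> m" for m N
  proof -
    have "GG ` {N..} \<subseteq> topspace PT" using GGt by auto
    then have "GG ` {N..} \<subseteq> CC N" unfolding CC_def by (rule closure_of_subset)
    then show ?thesis using that by auto
  qed
  have "\<Inter>(range CC) \<noteq> {}"
  proof (rule compact_space_fip[THEN iffD1, OF cPT, rule_format], intro conjI allI impI ballI)
    fix C assume "C \<in> range CC"
    then show "closedin PT C" unfolding CC_def by auto
  next
    fix \<F> assume F: "finite \<F> \<and> \<F> \<subseteq> range CC"
    then obtain I where I: "finite I" "\<F> = CC ` I" by (meson finite_subset_image)
    define m where "m = (if I = {} then 0 else Max I)"
    have "GG m \<in> CC i" if "i \<in> I" for i
    proof -
      have "i \<le> m" unfolding m_def using that I(1) by auto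
      then show ?thesis by (rule GGC)
    qed
    then have "GG m \<in> \<Inter>\<F>" using I(2) by auto
    then show "\<Inter>\<F> \<noteq> {}" by blast
  qed
  then obtain F where F: "\<And>N. F \<in> CC N" by blast
  have Ft: "F \<in> topspace PT" using F[of 0] closure_of_subset_topspace[of PT "GG ` {0..}"] unfolding CC_def by blast
  then have FK: "\<forall>x\<in>X. F x \<in> K" unfolding topPT by auto
  have proj: "continuous_map PT T (\<lambda>G. G x)" if "x \<in> X" for x
    unfolding PT_def by (rule continuous_map_product_projection[OF that])
  have opn: "openin PT {G \<in> topspace PT. G x \<in> Z.mball c \<delta> \<inter> K}" if "x \<in> X" for x c \<delta>
  proof (rule openin_continuous_map_preimage[OF proj[OF that]])
    show "openin T (Z.mball c \<delta> \<inter> K)" unfolding T_def by (rule openin_subtopology_Int) simp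
  qed
  have close: "\<exists>k\<ge>N. dZ (F x) (FF k x) < \<delta> \<and> dZ (F y) (FF k y) < \<delta> \<and> dZ (F w) (FF k w) < \<delta>"
    if x: "x \<in> X" and y: "y \<in> X" and w: "w \<in> X" and d: "0 < \<delta>" for x y w \<delta> N
  proof -
    define Onb where "Onb = {G \<in> topspace PT. G x \<in> Z.mball (F x) \<delta> \<inter> K} \<inter>
       {G \<in> topspace PT. G y \<in> Z.mball (F y) \<delta> \<inter> K} \<inter> {G \<in> topspace PT. G w \<in> Z.mball (F w) \<delta> \<inter> K}"
    have oO: "openin PT Onb" unfolding Onb_def using opn x y w by (intro openin_Int) auto
    have FxK: "F x \<in> K" "F y \<in> K" "F w \<in> K" using FK x y w by auto
    have FO: "F \<in> Onb" unfolding Onb_def using Ft FxK KZ d by auto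
    have "F \<in> PT closure_of (GG ` {N..})" using F[of N] unfolding CC_def .
    then obtain G where G: "G \<in> GG ` {N..}" "G \<in> Onb" using FO oO unfolding in_closure_of by blast
    then obtain k where k: "k \<ge> N" "G = GG k" by auto
    have "G x = FF k x" "G y = FF k y" "G w = FF k w" using k(2) x y w unfolding GG_def by auto
    then show ?thesis using G(2) k(1) unfolding Onb_def by auto
  qed
  show ?thesis using FK close by blast
qed

lemma (in Metric_space) quad:
  assumes "a \<in> M" "b \<in> M" "a' \<in> M" "b' \<in> M"
  shows "\<bar>d a b - d a' b'\<bar> \<le> d a a' + d b b'"
proof -
  have "d a b \<le> d a a' + d a' b" using triangle assms by blast
  moreover have "d a' b \<le> d a' b' + d b' b" using triangle assms by blast
  moreover have "d a' b' \<le> d a' a + d a b'" using triangle assms by blast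
  moreover have "d a b' \<le> d a b + d b b'" using triangle assms by blast
  moreover have "d b' b = d b b'" "d a' a = d a a'" using commute by auto
  ultimately show ?thesis by linarith
qed

lemma eta_mono_le:
  assumes "eta_homeo \<eta>" "0 \<le> a" "a \<le> b"
  shows "\<eta> a \<le> \<eta> b"
proof (cases "a = b")
  case False
  then have "a < b" using assms(3) by simp
  then show ?thesis using eta_basic(3)[OF assms(1) assms(2), of b] by simp
qed simp

theorem corollary5p2:
  fixes M :: "'a set" and d :: "'a \<Rightarrow> 'a \<Rightarrow> real" and p :: 'a
    and \<eta> :: "real \<Rightarrow> real"
  assumes "Metric_space M d"
    and "proper_mspace M d"
    and "doubling_mspace M d"
    and "p \<in> M"
    and "eta_homeo \<eta>"
    and "comparable_self_qs M d \<eta> p"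
  shows "\<forall>(Z :: 'b set) (z :: 'b) dZ. in_PWT M d p Z z dZ \<longrightarrow>
           (\<exists>f. quasisymmetric M d Z dZ (\<lambda>t. 1 / inv_into {0..} \<eta> (1 / t)) f)"
proof (intro allI impI)
  fix Z :: "'b set" and z :: 'b and dZ
  assume pwt: "in_PWT M d p Z z dZ"
  note ms = assms(1) and prp = assms(2) and db = assms(3) and pM = assms(4) and eh = assms(5)
  interpret M: Metric_space M d by fact
  obtain lam where lampos: "\<And>n. 0 < lam n" and lim: "lam \<longlonglongrightarrow> 0"
    and gh: "pGH_conv (\<lambda>n. M) (\<lambda>n. p) (\<lambda>n x y. d x y / lam n) Z z dZ"
    using pwt unfolding in_PWT_def by blast
  have MZ: "Metric_space Z dZ" and Zc: "Metric_space.mcomplete Z dZ" and zZ: "z \<in> Z"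
    using pGH_basic[OF gh] by auto
  interpret Z: Metric_space Z dZ by fact
  define etap where "etap t = 1 / inv_into {0..} \<eta> (1 / t)" for t
  have etap0: "\<And>t. 0 \<le> t \<Longrightarrow> 0 \<le> etap t" unfolding etap_def by (rule etap_nonneg[OF eh])
  have etapm: "\<And>s t. 0 \<le> s \<Longrightarrow> s \<le> t \<Longrightarrow> etap s \<le> etap t" unfolding etap_def by (rule etap_mono[OF eh])
  obtain rp where rp1: "0 < rp \<and> (\<exists>Cp > 0. \<forall>r. 0 < r \<and> r < rp \<longrightarrow>
        (\<exists>U. U \<subseteq> M.mball p r \<and> p \<in> U \<and>
             r / Cp \<le> mdiam d U \<and> mdiam d U \<le> Cp * r \<and>
             (\<exists>f. quasisymmetric U d M d \<eta> f \<and> f ` U = M)))"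
    using assms(6) unfolding comparable_self_qs_def by (rule exE)
  obtain Cp where Cp1: "0 < Cp \<and> (\<forall>r. 0 < r \<and> r < rp \<longrightarrow>
        (\<exists>U. U \<subseteq> M.mball p r \<and> p \<in> U \<and>
             r / Cp \<le> mdiam d U \<and> mdiam d U \<le> Cp * r \<and>
             (\<exists>f. quasisymmetric U d M d \<eta> f \<and> f ` U = M)))"
    using conjunct2[OF rp1] by (rule exE)
  have rp: "0 < rp" using rp1 by (rule conjunct1)
  have Cp: "0 < Cp" using Cp1 by (rule conjunct1)
  have H: "\<exists>U. U \<subseteq> M.mball p r \<and> p \<in> U \<and>
             r / Cp \<le> mdiam d U \<and> mdiam d U \<le> Cp * r \<and>
             (\<exists>f. quasisymmetric U d M d \<eta> f \<and> f ` U = M)" if "0 < r" "r < rp" for r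
    using conjunct2[OF Cp1] that by blast

  (* Step A: M is bounded and compact; two distinct points *)
  have "\<exists>U. U \<subseteq> M.mball p (rp/2) \<and> p \<in> U \<and>
             (rp/2) / Cp \<le> mdiam d U \<and> mdiam d U \<le> Cp * (rp/2) \<and>
             (\<exists>f. quasisymmetric U d M d \<eta> f \<and> f ` U = M)" by (rule H) (use rp in simp_all)
  then obtain U0 f0 where U0: "U0 \<subseteq> M.mball p (rp/2)" "p \<in> U0" "(rp/2) / Cp \<le> mdiam d U0"
      and f0: "quasisymmetric U0 d M d \<eta> f0" "f0 ` U0 = M"
    by blast
  have U0M: "U0 \<subseteq> M" using U0(1) M.mball_subset_mspace by blast
  have U0b: "\<And>u v. u \<in> U0 \<Longrightarrow> v \<in> U0 \<Longrightarrow> d u v < rp"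
  proof -
    fix u v assume "u \<in> U0" "v \<in> U0"
    then have uM: "u \<in> M" and vM: "v \<in> M" and "d p u < rp/2" "d p v < rp/2" using U0(1) by auto
    moreover have "d u v \<le> d p u + d p v" by (rule M.triangle''[OF uM pM vM])
    ultimately show "d u v < rp" by linarith
  qed
  have "0 < (rp/2) / Cp" using rp Cp by simp
  then have md0: "0 < mdiam d U0" using U0(3) by linarith
  have "U0 \<noteq> {}" using U0(2) by blast
  then obtain u0 v0 where uv0: "u0 \<in> U0" "v0 \<in> U0" "0 < d u0 v0"
    using mdiam_exists[of U0 0 d] md0 by blast
  have f0inj: "inj_on f0 U0" using qs_inverse(1)[OF ms U0M eh f0] .
  have f0ineq: "\<And>x y w. x\<in>U0 \<Longrightarrow> y\<in>U0 \<Longrightarrow> w\<in>U0 \<Longrightarrow> x \<noteq> w \<Longrightarrow>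
        d (f0 x) (f0 y) / d (f0 x) (f0 w) \<le> \<eta> (d x y / d x w)"
    using f0(1) unfolding quasisymmetric_def by blast
  define x0 where "x0 = f0 u0"
  define y0 where "y0 = f0 v0"
  have uv0ne: "u0 \<noteq> v0"
  proof
    assume "u0 = v0"
    then have "d u0 v0 = 0" using uv0(1) U0M by auto
    then show False using uv0(3) by simp
  qed
  have x0M: "x0 \<in> M" and y0M: "y0 \<in> M" unfolding x0_def y0_def using f0(2) uv0 by auto
  have x0y0: "x0 \<noteq> y0" unfolding x0_def y0_def using f0inj uv0(1,2) uv0ne by (meson inj_on_eq_iff)
  define c0 where "c0 = d x0 y0"
  have c0: "0 < c0" unfolding c0_def using x0M y0M x0y0 by simp
  define R where "R = c0 * \<eta> (rp / d u0 v0)"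
  have Rb: "d x0 a \<le> R" if aM: "a \<in> M" for a
  proof -
    obtain y where y: "y \<in> U0" "a = f0 y" using aM f0(2) by blast
    have "d x0 a / c0 \<le> \<eta> (d u0 y / d u0 v0)"
      unfolding x0_def c0_def y0_def y(2) by (rule f0ineq[OF uv0(1) y(1) uv0(2) uv0ne])
    also have "\<dots> \<le> \<eta> (rp / d u0 v0)"
      using eta_mono_le[OF eh] U0b[OF uv0(1) y(1)] uv0(3) by (simp add: divide_right_mono)
    finally show ?thesis unfolding R_def using c0 by (simp add: field_simps)
  qed
  have Mball: "M = M.mcball x0 R" using Rb x0M by auto
  have cM: "compact_space M.mtopology"
  proof -
    have "compactin M.mtopology (M.mcball x0 R)" using prp x0M unfolding proper_mspace_def by blast
    then show ?thesis unfolding compact_space_def using Mball by simp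
  qed
  have Db: "d a b \<le> 2 * R" if "a \<in> M" "b \<in> M" for a b
  proof -
    have "d a b \<le> d x0 a + d x0 b" by (rule M.triangle''[OF that(1) x0M that(2)])
    then show ?thesis using Rb[OF that(1)] Rb[OF that(2)] by linarith
  qed
  have far: "\<exists>w\<in>M. c0/2 \<le> d x w" if xM: "x \<in> M" for x
  proof (cases "c0/2 \<le> d x x0")
    case True then show ?thesis using x0M by blast
  next
    case False
    have "c0 \<le> d x0 x + d x y0" unfolding c0_def by (rule M.triangle[OF x0M xM y0M])
    moreover have "d x0 x = d x x0" by (rule M.commute)
    ultimately have "c0/2 \<le> d x y0" using False by linarith
    then show ?thesis using y0M by blast
  qed

  define Q where "Q k l U f g \<longleftrightarrow> 0 < l \<and> l < rp \<and> U \<subseteq> M.mball p l \<and> p \<in> U \<and> l / Cp \<le> mdiam d U \<and>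
      quasisymmetric U d M d \<eta> f \<and> f ` U = M \<and> g \<in> M.mball p (3 * l) \<rightarrow> Z \<and> g p = z \<and>
      (\<forall>x\<in>M.mball p (3 * l). \<forall>y\<in>M.mball p (3 * l). \<bar>dZ (g x) (g y) - d x y / l\<bar> < 1 / (real k + 1))"
    for k l U f g
  have "\<exists>l U f g. Q k l U f g" for k
  proof -
    have "\<forall>\<^sub>F n in sequentially. lam n < rp" using order_tendstoD(2)[OF lim rp] .
    then obtain N1 where N1: "\<And>n. n \<ge> N1 \<Longrightarrow> lam n < rp" unfolding eventually_sequentially by blast
    obtain N2 where N2: "\<forall>n\<ge>N2. \<exists>g. g \<in> Metric_space.mball M (\<lambda>x y. d x y / lam n) p 3 \<rightarrow> Z \<and> g p = z \<and>
             (\<forall>x\<in>Metric_space.mball M (\<lambda>x y. d x y / lam n) p 3.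
                \<forall>y\<in>Metric_space.mball M (\<lambda>x y. d x y / lam n) p 3.
                  \<bar>dZ (g x) (g y) - d x y / lam n\<bar> < 1 / (real k + 1)) \<and>
             (\<forall>w\<in>Metric_space.mball Z dZ z (3 - 1 / (real k + 1)).
                \<exists>x\<in>Metric_space.mball M (\<lambda>x y. d x y / lam n) p 3. dZ w (g x) < 1 / (real k + 1))"
      using pGH_get[OF gh, of 3 "1 / (real k + 1)"] by auto
    define n where "n = max N1 N2"
    define l where "l = lam n"
    have l0: "0 < l" and lrp: "l < rp" unfolding l_def n_def using lampos N1 by auto
    have mb: "Metric_space.mball M (\<lambda>x y. d x y / lam n) p 3 = M.mball p (3 * l)"
      unfolding l_def by (rule mball_scaled[OF ms pGH_basic(4)[OF gh] lampos])
    have nN2: "n \<ge> N2" unfolding n_def by simp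
    obtain g where g0: "g \<in> Metric_space.mball M (\<lambda>x y. d x y / lam n) p 3 \<rightarrow> Z" "g p = z"
      "\<forall>x\<in>Metric_space.mball M (\<lambda>x y. d x y / lam n) p 3.
                \<forall>y\<in>Metric_space.mball M (\<lambda>x y. d x y / lam n) p 3.
                  \<bar>dZ (g x) (g y) - d x y / lam n\<bar> < 1 / (real k + 1)"
      using N2 nN2 by blast
    have g: "g \<in> M.mball p (3 * l) \<rightarrow> Z" "g p = z"
      "\<forall>x\<in>M.mball p (3 * l). \<forall>y\<in>M.mball p (3 * l). \<bar>dZ (g x) (g y) - d x y / l\<bar> < 1 / (real k + 1)"
      using g0 unfolding mb unfolding l_def by auto
    obtain U f where U: "U \<subseteq> M.mball p l" "p \<in> U" "l / Cp \<le> mdiam d U"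
      and f: "quasisymmetric U d M d \<eta> f" "f ` U = M"
      using H[OF l0 lrp] by blast
    have "Q k l U f g" unfolding Q_def using l0 lrp U f g by blast
    then show ?thesis by blast
  qed
  then obtain L UU ff gg where Qk: "\<And>k. Q k (L k) (UU k) (ff k) (gg k)" by metis
  have L0: "\<And>k. 0 < L k" and UUb: "\<And>k. UU k \<subseteq> M.mball p (L k)" and pUU: "\<And>k. p \<in> UU k"
    and UUd: "\<And>k. L k / Cp \<le> mdiam d (UU k)"
    and ffq: "\<And>k. quasisymmetric (UU k) d M d \<eta> (ff k)" and ffo: "\<And>k. ff k ` UU k = M"
    and ggZ: "\<And>k. gg k \<in> M.mball p (3 * L k) \<rightarrow> Z" and ggp: "\<And>k. gg k p = z"
    and ggd: "\<And>k x y. x \<in> M.mball p (3 * L k) \<Longrightarrow> y \<in> M.mball p (3 * L k) \<Longrightarrow>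
         \<bar>dZ (gg k x) (gg k y) - d x y / L k\<bar> < 1 / (real k + 1)"
    using Qk unfolding Q_def by auto
  have UUM: "\<And>k. UU k \<subseteq> M" using UUb M.mball_subset_mspace by blast

  define hh where "hh k = inv_into (UU k) (ff k)" for k
  define FF where "FF k x = gg k (hh k x)" for k x
  define Dk where "Dk k x y = d (hh k x) (hh k y) / L k" for k x y
  have hhU: "\<And>k x. x \<in> M \<Longrightarrow> hh k x \<in> UU k"
    unfolding hh_def by (rule qs_inverse(3)[OF ms UUM eh ffq ffo])
  have hhM: "\<And>k x. x \<in> M \<Longrightarrow> hh k x \<in> M" using hhU UUM by blast
  have hhp: "\<And>k x. x \<in> M \<Longrightarrow> d p (hh k x) < L k"
  proof -
    fix k x assume "x \<in> M"
    then have "hh k x \<in> M.mball p (L k)" using hhU UUb by blast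
    then show "d p (hh k x) < L k" by simp
  qed
  have hhB: "\<And>k x. x \<in> M \<Longrightarrow> hh k x \<in> M.mball p (3 * L k)"
  proof -
    fix k x assume "x \<in> M"
    then show "hh k x \<in> M.mball p (3 * L k)" using hhp[of x k] hhM[of x k] pM L0[of k] by simp
  qed
  have pB: "\<And>k. p \<in> M.mball p (3 * L k)" using pM L0 by simp
  have P2: "\<And>k x y. x \<in> M \<Longrightarrow> y \<in> M \<Longrightarrow> \<bar>dZ (FF k x) (FF k y) - Dk k x y\<bar> < 1 / (real k + 1)"
    unfolding FF_def Dk_def using ggd hhB by blast
  have FFZ: "\<And>k x. x \<in> M \<Longrightarrow> FF k x \<in> Z" unfolding FF_def by (rule funcset_mem[OF ggZ hhB])
  have P3: "\<And>k x. x \<in> M \<Longrightarrow> FF k x \<in> Z.mcball z 2"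
  proof -
    fix k x assume xM: "x \<in> M"
    have "\<bar>dZ (gg k p) (gg k (hh k x)) - d p (hh k x) / L k\<bar> < 1 / (real k + 1)"
      by (rule ggd[OF pB hhB[OF xM]])
    moreover have "d p (hh k x) / L k < 1" using hhp[OF xM] L0[of k] by simp
    moreover have "1 / (real k + 1) \<le> 1" by simp
    ultimately have "dZ z (FF k x) \<le> 2" unfolding FF_def ggp by linarith
    then show "FF k x \<in> Z.mcball z 2" using zZ FFZ[OF xM] by simp
  qed
  have P6: "\<And>k x y w. x \<in> M \<Longrightarrow> y \<in> M \<Longrightarrow> w \<in> M \<Longrightarrow> x \<noteq> w \<Longrightarrow>
      Dk k x y \<le> etap (d x y / d x w) * Dk k x w"
  proof -
    fix k x y w assume xyw: "x \<in> M" "y \<in> M" "w \<in> M" "x \<noteq> w"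
    have "d (hh k x) (hh k y) \<le> etap (d x y / d x w) * d (hh k x) (hh k w)"
      unfolding hh_def etap_def by (rule qs_inverse(5)[OF ms UUM eh ffq ffo xyw])
    then show "Dk k x y \<le> etap (d x y / d x w) * Dk k x w"
      unfolding Dk_def using L0[of k] by (simp add: divide_right_mono)
  qed
  have P4: "\<And>k x y. x \<in> M \<Longrightarrow> y \<in> M \<Longrightarrow> Dk k x y \<le> 2 * etap (d x y / (c0/2))"
  proof -
    fix k x y assume xM: "x \<in> M" and yM: "y \<in> M"
    obtain w where wM: "w \<in> M" and xw: "c0/2 \<le> d x w" using far[OF xM] by blast
    have xw0: "0 < d x w" using xw c0 by linarith
    have xnw: "x \<noteq> w"
    proof
      assume "x = w"
      then have "d x w = 0" using wM by simp
      then show False using xw0 by simp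
    qed
    have "Dk k x w < 2"
    proof -
      have "d (hh k x) (hh k w) \<le> d p (hh k x) + d p (hh k w)"
        by (rule M.triangle''[OF hhM[OF xM] pM hhM[OF wM]])
      then have "d (hh k x) (hh k w) < 2 * L k" using hhp[OF xM, of k] hhp[OF wM, of k] by linarith
      then show ?thesis unfolding Dk_def using L0[of k] by (simp add: field_simps)
    qed
    have dv: "d x y / d x w \<le> d x y / (c0/2)"
      by (rule divide_left_mono) (use xw c0 xw0 in auto)
    have E: "etap (d x y / d x w) \<le> etap (d x y / (c0/2))"
      by (rule etapm[OF _ dv]) simp
    have E0: "0 \<le> etap (d x y / d x w)" by (rule etap0) simp
    have Dk0: "0 \<le> Dk k x w" unfolding Dk_def using L0[of k] by simp
    have "Dk k x y \<le> etap (d x y / d x w) * Dk k x w" by (rule P6[OF xM yM wM xnw])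
    also have "\<dots> \<le> etap (d x y / d x w) * 2" using E0 \<open>Dk k x w < 2\<close> by (simp add: mult_left_mono)
    also have "\<dots> \<le> etap (d x y / (c0/2)) * 2" using E by simp
    finally show "Dk k x y \<le> 2 * etap (d x y / (c0/2))" by simp
  qed
  define Kc where "Kc = etap (2 * R / c0)"
  have P5: "\<And>k. 1 / (4 * Cp) < Kc * Dk k x0 y0"
  proof -
    fix k
    have ne: "UU k \<noteq> {}" using pUU by blast
    have "L k / (2 * Cp) < L k / Cp" using L0[of k] Cp by (simp add: field_simps)
    then have "L k / (2 * Cp) < mdiam d (UU k)" using UUd[of k] by linarith
    then obtain u v where uv: "u \<in> UU k" "v \<in> UU k" "L k / (2 * Cp) < d u v"
      using mdiam_exists[OF ne] by blast
    have img: "hh k ` M = UU k" unfolding hh_def by (rule qs_inverse(2)[OF ms UUM eh ffq ffo])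
    obtain a b where ab: "a \<in> M" "b \<in> M" "u = hh k a" "v = hh k b" using uv(1,2) img by blast
    have bnd: "d (hh k x0) (hh k a') \<le> Kc * d (hh k x0) (hh k y0)" if a'M: "a' \<in> M" for a'
    proof -
      have "d (hh k x0) (hh k a') \<le> etap (d x0 a' / d x0 y0) * d (hh k x0) (hh k y0)"
        unfolding hh_def etap_def by (rule qs_inverse(5)[OF ms UUM eh ffq ffo x0M a'M y0M x0y0])
      moreover have "etap (d x0 a' / d x0 y0) \<le> Kc"
        unfolding Kc_def c0_def[symmetric]
        by (rule etapm) (use Db[OF x0M a'M] c0 in \<open>auto intro: divide_right_mono\<close>)
      ultimately show ?thesis by (meson M.nonneg mult_right_mono order_trans)
    qed
    have "d u v \<le> d (hh k x0) u + d (hh k x0) v"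
      using M.triangle''[OF _ hhM[OF x0M] _] uv(1,2) UUM by blast
    also have "\<dots> \<le> 2 * (Kc * d (hh k x0) (hh k y0))"
      using bnd[OF ab(1)] bnd[OF ab(2)] unfolding ab(3,4) by linarith
    finally have "L k / (2 * Cp) < 2 * (Kc * d (hh k x0) (hh k y0))" using uv(3) by linarith
    then show "1 / (4 * Cp) < Kc * Dk k x0 y0"
      unfolding Dk_def using L0[of k] Cp by (simp add: field_simps)
  qed

  define K where "K = Z.mtopology closure_of (Z.mcball z 2)"
  have Ktb: "Z.mtotally_bounded (Z.mcball z 2)" by (rule Zball_tb[OF ms db pM lampos gh])
  have cK: "compactin Z.mtopology K"
    using Z.mtotally_bounded_eq_compact_closure_of[OF Zc] Ktb unfolding K_def by blast
  have KZ: "K \<subseteq> Z" using compactin_subset_topspace[OF cK] by simp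
  have FFK: "\<And>k x. x \<in> M \<Longrightarrow> FF k x \<in> K"
  proof -
    fix k x assume "x \<in> M"
    have "Z.mcball z 2 \<subseteq> K" unfolding K_def by (rule closure_of_subset) (simp add: Z.mcball_subset_mspace)
    then show "FF k x \<in> K" using P3[OF \<open>x \<in> M\<close>] by blast
  qed
  obtain F where FK: "\<forall>x\<in>M. F x \<in> K" and
    Fcl: "\<forall>x\<in>M. \<forall>y\<in>M. \<forall>w\<in>M. \<forall>\<delta>>0. \<forall>N. \<exists>k\<ge>N.
        dZ (F x) (FF k x) < \<delta> \<and> dZ (F y) (FF k y) < \<delta> \<and> dZ (F w) (FF k w) < \<delta>"
    using cluster_point[OF MZ cK, of M FF] FFK by blast
  have FZ: "\<And>x. x \<in> M \<Longrightarrow> F x \<in> Z" using FK KZ by blast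

  have transfer: "\<exists>k. \<bar>dZ (F x) (F y) - Dk k x y\<bar> < e \<and> \<bar>dZ (F x) (F w) - Dk k x w\<bar> < e"
    if xyw: "x \<in> M" "y \<in> M" "w \<in> M" and e: "0 < e" for x y w e
  proof -
    obtain N where N: "inverse (real (Suc N)) < e/2" using reals_Archimedean[of "e/2"] e by auto
    obtain k where k: "k \<ge> N" "dZ (F x) (FF k x) < e/4" "dZ (F y) (FF k y) < e/4" "dZ (F w) (FF k w) < e/4"
      using Fcl xyw e by (meson zero_less_divide_iff zero_less_numeral)
    have "1 / (real k + 1) \<le> inverse (real (Suc N))" using k(1) by (simp add: inverse_eq_divide frac_le)
    then have ke: "1 / (real k + 1) < e/2" using N by linarith
    have q1: "\<bar>dZ (F x) (F y) - dZ (FF k x) (FF k y)\<bar> \<le> dZ (F x) (FF k x) + dZ (F y) (FF k y)"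
      by (rule Z.quad[OF FZ[OF xyw(1)] FZ[OF xyw(2)] FFZ[OF xyw(1)] FFZ[OF xyw(2)]])
    have q2: "\<bar>dZ (F x) (F w) - dZ (FF k x) (FF k w)\<bar> \<le> dZ (F x) (FF k x) + dZ (F w) (FF k w)"
      by (rule Z.quad[OF FZ[OF xyw(1)] FZ[OF xyw(3)] FFZ[OF xyw(1)] FFZ[OF xyw(3)]])
    have "\<bar>dZ (FF k x) (FF k y) - Dk k x y\<bar> < 1 / (real k + 1)" by (rule P2[OF xyw(1,2)])
    moreover have "\<bar>dZ (FF k x) (FF k w) - Dk k x w\<bar> < 1 / (real k + 1)" by (rule P2[OF xyw(1,3)])
    ultimately show ?thesis using q1 q2 k ke by (intro exI[of _ k]) linarith
  qed

  have Q1: "dZ (F x) (F y) \<le> etap (d x y / d x w) * dZ (F x) (F w)"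
    if xyw: "x \<in> M" "y \<in> M" "w \<in> M" "x \<noteq> w" for x y w
  proof -
    define E where "E = etap (d x y / d x w)"
    have E0: "0 \<le> E" unfolding E_def by (rule etap0) simp
    show ?thesis unfolding E_def[symmetric]
    proof (rule field_le_epsilon)
      fix e :: real assume e: "0 < e"
      define e' where "e' = e / (E + 1)"
      have e'0: "0 < e'" unfolding e'_def using e E0 by simp
      have Ee': "(E + 1) * e' = e" unfolding e'_def using E0 by simp
      obtain k where k: "\<bar>dZ (F x) (F y) - Dk k x y\<bar> < e'" "\<bar>dZ (F x) (F w) - Dk k x w\<bar> < e'"
        using transfer[OF xyw(1-3) e'0] by blast
      have "Dk k x y \<le> E * Dk k x w" unfolding E_def by (rule P6[OF xyw])
      also have "\<dots> \<le> E * (dZ (F x) (F w) + e')" using k(2) E0 by (intro mult_left_mono) auto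
      finally have "dZ (F x) (F y) \<le> E * dZ (F x) (F w) + (E * e' + e')"
        using k(1) by (simp add: algebra_simps)
      also have "E * e' + e' = e" using Ee' by (simp add: algebra_simps)
      finally show "dZ (F x) (F y) \<le> E * dZ (F x) (F w) + e" .
    qed
  qed
  have Q2: "dZ (F x) (F y) \<le> 2 * etap (d x y / (c0/2))" if xy: "x \<in> M" "y \<in> M" for x y
  proof (rule field_le_epsilon)
    fix e :: real assume e: "0 < e"
    obtain k where k: "\<bar>dZ (F x) (F y) - Dk k x y\<bar> < e" using transfer[OF xy(1,2,2) e] by blast
    then show "dZ (F x) (F y) \<le> 2 * etap (d x y / (c0/2)) + e" using P4[OF xy, of k] by linarith
  qed
  have R0: "0 \<le> R" using Rb[OF x0M] x0M by simp
  have Kc0: "0 \<le> Kc" unfolding Kc_def by (rule etap0) (use R0 c0 in simp)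
  have Q3: "1 / (4 * Cp) \<le> Kc * dZ (F x0) (F y0)"
  proof (rule field_le_epsilon)
    fix e :: real assume e: "0 < e"
    define e' where "e' = e / (Kc + 1)"
    have e'0: "0 < e'" unfolding e'_def using e Kc0 by simp
    obtain k where k: "\<bar>dZ (F x0) (F y0) - Dk k x0 y0\<bar> < e'" using transfer[OF x0M y0M y0M e'0] by blast
    have "Kc * Dk k x0 y0 \<le> Kc * (dZ (F x0) (F y0) + e')" using k Kc0 by (intro mult_left_mono) auto
    moreover have "Kc * e' \<le> e" unfolding e'_def using Kc0 e by (simp add: field_simps)
    ultimately show "1 / (4 * Cp) \<le> Kc * dZ (F x0) (F y0) + e" using P5[of k] by (simp add: algebra_simps)
  qed
  have Fx0y0: "F x0 \<noteq> F y0"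
  proof
    assume "F x0 = F y0"
    then have "dZ (F x0) (F y0) = 0" using FZ[OF x0M] by simp
    then show False using Q3 Cp by simp
  qed

  have Finj: "inj_on F M"
  proof (rule inj_onI, rule ccontr)
    fix x w assume xM: "x \<in> M" and wM: "w \<in> M" and eq: "F x = F w" and ne: "x \<noteq> w"
    have all: "F y = F x" if yM: "y \<in> M" for y
    proof -
      have "dZ (F x) (F y) \<le> etap (d x y / d x w) * dZ (F x) (F w)" by (rule Q1[OF xM yM wM ne])
      also have "\<dots> = 0" using eq FZ[OF wM] by simp
      finally have "dZ (F x) (F y) = 0" using Z.nonneg[of "F x" "F y"] by linarith
      then show ?thesis using FZ[OF xM] FZ[OF yM] by simp
    qed
    show False using all[OF x0M] all[OF y0M] Fx0y0 by simp
  qed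
  have Fcont: "continuous_map M.mtopology Z.mtopology F"
    unfolding M.metric_continuous_map[OF MZ]
  proof (intro conjI ballI allI impI)
    show "F ` M \<subseteq> Z" using FZ by blast
    fix a and \<epsilon> :: real assume aM: "a \<in> M" and \<epsilon>: "0 < \<epsilon>"
    obtain \<delta>0 where \<delta>0: "0 < \<delta>0" "\<And>t. 0 \<le> t \<and> t < \<delta>0 \<Longrightarrow> etap t < \<epsilon>/2"
      using etap_small[OF eh, of "\<epsilon>/2"] \<epsilon> unfolding etap_def by auto
    show "\<exists>\<delta>>0. \<forall>x. x \<in> M \<and> d a x < \<delta> \<longrightarrow> dZ (F a) (F x) < \<epsilon>"
    proof (intro exI[of _ "\<delta>0 * c0 / 2"] conjI allI impI)
      show "0 < \<delta>0 * c0 / 2" using \<delta>0(1) c0 by simp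
      fix x assume x: "x \<in> M \<and> d a x < \<delta>0 * c0 / 2"
      have "d a x / (c0/2) < \<delta>0" using x c0 by (simp add: field_simps)
      then have "etap (d a x / (c0/2)) < \<epsilon>/2" using \<delta>0(2) c0 by simp
      then show "dZ (F a) (F x) < \<epsilon>" using Q2[OF aM] x by fastforce
    qed
  qed
  have hom: "homeomorphic_map M.mtopology (subtopology Z.mtopology (F ` M)) F"
  proof (rule continuous_imp_homeomorphic_map)
    show "continuous_map M.mtopology (subtopology Z.mtopology (F ` M)) F"
      unfolding continuous_map_in_subtopology using Fcont by auto
    show "compact_space M.mtopology" by (rule cM)
    show "Hausdorff_space (subtopology Z.mtopology (F ` M))"
      by (rule Hausdorff_space_subtopology[OF Z.Hausdorff_space_mtopology])
    show "F ` topspace M.mtopology = topspace (subtopology Z.mtopology (F ` M))"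
      using FZ by auto
    show "inj_on F (topspace M.mtopology)" using Finj by simp
  qed
  have "quasisymmetric M d Z dZ (\<lambda>t. 1 / inv_into {0..} \<eta> (1 / t)) F"
    unfolding quasisymmetric_def
  proof (intro conjI ballI impI)
    show "F \<in> M \<rightarrow> Z" using FZ by blast
    show "homeomorphic_map M.mtopology (subtopology Z.mtopology (F ` M)) F" by (rule hom)
    fix x y w assume xM: "x \<in> M" and yM: "y \<in> M" and wM: "w \<in> M" and ne: "x \<noteq> w"
    have pos: "0 < dZ (F x) (F w)"
      using Finj xM wM ne FZ[OF xM] FZ[OF wM] by (simp add: inj_on_eq_iff)
    have "dZ (F x) (F y) \<le> etap (d x y / d x w) * dZ (F x) (F w)" by (rule Q1[OF xM yM wM ne])
    then show "dZ (F x) (F y) / dZ (F x) (F w) \<le> 1 / inv_into {0..} \<eta> (1 / (d x y / d x w))"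
      using pos unfolding etap_def by (simp add: pos_divide_le_eq)
  qed
  then show "\<exists>f. quasisymmetric M d Z dZ (\<lambda>t. 1 / inv_into {0..} \<eta> (1 / t)) f" by blast
qed

end
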